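(* Let $K$ be a finite field of characteristic $p$, let $L$ be a finite extension of $K$ such that $[L:K]$ is a power of a prime $\ell\neq p$, and let $d$ be an integer with $\gcd(d,|L|-1)=1$. Let $1/d$ denote an integer that is a multiplicative inverse of $d$ modulo $p-1$, and regard $[L:K]$ as a (nonzero) element of $\mathbb{F}_p\subseteq K$. Then for every $a\in K$, $$W_{L,d}(a)\equiv W_{K,d}\big([L:K]^{1-1/d}a\big)\pmod{\ell},$$ where the congruence means that the difference is $\ell$ times an algebraic integer.
   Context: For a finite field $F$ of characteristic $p$, $\psi_F(x)=\exp(2\pi i\,\mathrm{Tr}_{F/\mathbb{F}_p}(x)/p)$; for a field $F$ with $\gcd(d,|F|-1)=1$ and $a\in F$, $W_{F,d}(a)=\sum_{x\in F}\psi_F(x^d+ax)$. *)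

theory Defs
  imports "HOL-Analysis.Analysis" "HOL-Computational_Algebra.Polynomial" "HOL-Number_Theory.Cong"
begin

definition is_subfield :: "'a::field set \<Rightarrow> bool" where
  "is_subfield K \<longleftrightarrow> 0 \<in> K \<and> 1 \<in> K \<and>
     (\<forall>x\<in>K. \<forall>y\<in>K. x + y \<in> K \<and> x * y \<in> K) \<and>
     (\<forall>x\<in>K. - x \<in> K \<and> inverse x \<in> K)"

definition prime_deg :: "'a::{finite,field} set \<Rightarrow> nat" where
  "prime_deg F = (THE m. card F = CHAR('a) ^ m)"

text \<open>Degree [L:K] of the ambient finite field L = UNIV over a subfield K.\<close>
definition ext_deg :: "'a::{finite,field} set \<Rightarrow> nat" where
  "ext_deg K = (THE n. CARD('a) = card K ^ n)"

definition ftrace :: "'a::{finite,field} set \<Rightarrow> 'a \<Rightarrow> 'a" where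
  "ftrace F x = (\<Sum>i<prime_deg F. x ^ (CHAR('a) ^ i))"

text \<open>The canonical additive character psi_F(x) = exp(2 pi i Tr(x)/p), where the trace,
  an element of the prime field, is identified with its representative in {0..p-1}.\<close>
definition fpsi :: "'a::{finite,field} set \<Rightarrow> 'a \<Rightarrow> complex" where
  "fpsi F x = exp (2 * of_real pi * \<i> *
      of_nat (SOME t. t < CHAR('a) \<and> of_nat t = ftrace F x) / of_nat CHAR('a))"

definition Wsum :: "'a::{finite,field} set \<Rightarrow> int \<Rightarrow> 'a \<Rightarrow> complex" where
  "Wsum F d a = (\<Sum>x\<in>F. fpsi F (x powi d + a * x))"

end

theory Submission
  imports Defs "HOL-Computational_Algebra.Primes" "HOL-Number_Theory.Cong" "Jordan_Normal_Form.Char_Poly"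
begin


lemma char_prime: "prime CHAR('a::{finite,field})"
  by (rule prime_CHAR_semidom, rule finite_imp_CHAR_pos) simp

lemma char_gt1: "CHAR('a::{finite,field}) > 1"
  using char_prime prime_gt_1_nat by blast

lemma sf_0: "is_subfield K \<Longrightarrow> 0 \<in> K" unfolding is_subfield_def by blast
lemma sf_1: "is_subfield K \<Longrightarrow> 1 \<in> K" unfolding is_subfield_def by blast
lemma sf_add: "is_subfield K \<Longrightarrow> x \<in> K \<Longrightarrow> y \<in> K \<Longrightarrow> x + y \<in> K" unfolding is_subfield_def by blast
lemma sf_mult: "is_subfield K \<Longrightarrow> x \<in> K \<Longrightarrow> y \<in> K \<Longrightarrow> x * y \<in> K" unfolding is_subfield_def by blast
lemma sf_uminus: "is_subfield K \<Longrightarrow> x \<in> K \<Longrightarrow> - x \<in> K" unfolding is_subfield_def by blast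
lemma sf_inverse: "is_subfield K \<Longrightarrow> x \<in> K \<Longrightarrow> inverse x \<in> K" unfolding is_subfield_def by blast
lemma sf_diff: "is_subfield K \<Longrightarrow> x \<in> K \<Longrightarrow> y \<in> K \<Longrightarrow> x - y \<in> K"
  using sf_add sf_uminus by (metis diff_conv_add_uminus)
lemma sf_power: "is_subfield K \<Longrightarrow> x \<in> K \<Longrightarrow> x ^ n \<in> K"
  by (induction n) (auto intro: sf_1 sf_mult)
lemma sf_powi: "is_subfield K \<Longrightarrow> x \<in> K \<Longrightarrow> x powi n \<in> K"
  by (auto simp: power_int_def intro: sf_power sf_inverse)
lemma sf_of_nat: "is_subfield K \<Longrightarrow> of_nat n \<in> K"
  by (induction n) (auto intro: sf_0 sf_1 sf_add)

lemma sf_UNIV: "is_subfield UNIV" unfolding is_subfield_def by simp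

lemma power_card_sf:
  fixes x :: "'a::{finite,field}"
  assumes K: "is_subfield K" and x: "x \<in> K"
  shows "x ^ card K = x"
proof -
  have fin: "finite K" by simp
  have cpos: "card K > 0" using sf_0[OF K] fin card_gt_0_iff by blast
  show ?thesis
  proof (cases "x = 0")
    case True thus ?thesis using cpos by simp
  next
    case False
    have "(\<Prod>y\<in>K-{0}. x * y) = (\<Prod>y\<in>K-{0}. y)"
      by (rule prod.reindex_bij_witness[of _ "\<lambda>y. y / x" "\<lambda>y. x * y"])
         (use False x K in \<open>auto simp: divide_inverse intro: sf_mult sf_inverse\<close>)
    moreover have "(\<Prod>y\<in>K-{0}. x * y) = x ^ card (K - {0}) * (\<Prod>y\<in>K-{0}. y)"
      by (simp add: prod.distrib)
    moreover have "(\<Prod>y\<in>K-{0}. y) \<noteq> 0" by simp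
    ultimately have "x ^ card (K - {0}) = 1" by simp
    moreover have "card (K - {0}) = card K - 1" using sf_0[OF K] by simp
    ultimately have "x ^ (card K - 1) = 1" by simp
    hence "x * x ^ (card K - 1) = x" by simp
    thus ?thesis using cpos by (metis Suc_diff_1 power_Suc)
  qed
qed

lemma card_power_sf:
  fixes K F :: "'a::{finite,field} set"
  assumes K: "is_subfield K" and F0: "0 \<in> F"
    and Fadd: "\<forall>x\<in>F. \<forall>y\<in>F. x + y \<in> F" and Fsc: "\<forall>k\<in>K. \<forall>x\<in>F. k * x \<in> F"
  shows "\<exists>n. card F = card K ^ n"
proof -
  have main: "S \<subseteq> F \<Longrightarrow> 0 \<in> S \<Longrightarrow> (\<forall>x\<in>S. \<forall>y\<in>S. x + y \<in> S) \<Longrightarrow> (\<forall>k\<in>K. \<forall>x\<in>S. k * x \<in> S)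
     \<Longrightarrow> (\<exists>j. card S = card K ^ j) \<Longrightarrow> (\<exists>n. card F = card K ^ n)" for S
  proof (induction "card F - card S" arbitrary: S rule: less_induct)
    case less
    show ?case
    proof (cases "S = F")
      case True thus ?thesis using less.prems(5) by simp
    next
      case False
      then obtain v where v: "v \<in> F" "v \<notin> S" using less.prems(1) by blast
      define S' where "S' = (\<lambda>(s,k). s + k * v) ` (S \<times> K)"
      have Ssub: "s - t \<in> S" if "s \<in> S" "t \<in> S" for s t
      proof -
        have "(-1) * t \<in> S" using less.prems(4) that sf_uminus[OF K sf_1[OF K]] by blast
        hence "s + (-1) * t \<in> S" using less.prems(3) that by blast
        thus ?thesis by simp
      qed
      have inj: "inj_on (\<lambda>(s,k). s + k * v) (S \<times> K)"
      proof (rule inj_onI, clarify)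
        fix s k s' k' assume h: "s \<in> S" "k \<in> K" "s' \<in> S" "k' \<in> K" "s + k * v = s' + k' * v"
        show "s = s' \<and> k = k'"
        proof (cases "k = k'")
          case True thus ?thesis using h by simp
        next
          case False
          have "(k - k') * v = s' - s" using h(5) by (simp add: algebra_simps)
          hence "v = inverse (k - k') * (s' - s)" using False by (simp add: field_simps)
          moreover have "inverse (k - k') \<in> K" using h K by (intro sf_inverse sf_diff) auto
          ultimately have "v \<in> S" using less.prems(4) Ssub h by metis
          thus ?thesis using v by blast
        qed
      qed
      have cS': "card S' = card S * card K"
        unfolding S'_def using card_image[OF inj] by (simp add: card_cartesian_product)
      have S'F: "S' \<subseteq> F" unfolding S'_def using less.prems(1) v(1) Fadd Fsc by auto
      have SS': "S \<subseteq> S'" unfolding S'_def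
      proof
        fix s assume "s \<in> S"
        thus "s \<in> (\<lambda>(s,k). s + k * v) ` (S \<times> K)" using sf_0[OF K] by (intro image_eqI[of _ _ "(s,0)"]) auto
      qed
      have vS': "v \<in> S'" unfolding S'_def using less.prems(2) sf_1[OF K]
        by (intro image_eqI[of _ _ "(0,1)"]) auto
      have "card S < card S'" using SS' vS' v(2) by (intro psubset_card_mono) auto
      moreover have "card S' \<le> card F" using S'F by (simp add: card_mono)
      ultimately have lt: "card F - card S' < card F - card S" by simp
      have "0 \<in> S'" using SS' less.prems(2) by blast
      moreover have "\<forall>x\<in>S'. \<forall>y\<in>S'. x + y \<in> S'"
      proof (intro ballI)
        fix x y assume "x \<in> S'" "y \<in> S'"
        then obtain s k s' k' where "s \<in> S" "k \<in> K" "s' \<in> S" "k' \<in> K" "x = s + k * v" "y = s' + k' * v"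
          unfolding S'_def by auto
        moreover have "x + y = (s + s') + (k + k') * v" using calculation by (simp add: algebra_simps)
        ultimately show "x + y \<in> S'" unfolding S'_def using less.prems(3) sf_add[OF K]
          by (intro image_eqI[of _ _ "(s + s', k + k')"]) auto
      qed
      moreover have "\<forall>c\<in>K. \<forall>x\<in>S'. c * x \<in> S'"
      proof (intro ballI)
        fix c x assume "c \<in> K" "x \<in> S'"
        then obtain s k where "s \<in> S" "k \<in> K" "x = s + k * v" unfolding S'_def by auto
        moreover have "c * x = c * s + (c * k) * v" using calculation by (simp add: algebra_simps)
        ultimately show "c * x \<in> S'" unfolding S'_def using less.prems(4) sf_mult[OF K] \<open>c \<in> K\<close>
          by (intro image_eqI[of _ _ "(c * s, c * k)"]) auto
      qed
      moreover obtain j where "card S = card K ^ j" using less.prems(5) by blast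
      hence "card S' = card K ^ Suc j" using cS' by simp
      ultimately show ?thesis using less.hyps[OF lt S'F] by blast
    qed
  qed
  show ?thesis by (rule main[of "{0}"]) (use F0 in \<open>auto intro: exI[of _ 0]\<close>)
qed



lemma of_nat_mod_char: "(of_nat n :: 'a::{finite,field}) = of_nat (n mod CHAR('a))"
proof -
  have "(of_nat n :: 'a) = of_nat (CHAR('a) * (n div CHAR('a)) + n mod CHAR('a))" by simp
  also have "\<dots> = of_nat (n mod CHAR('a))" by (simp only: of_nat_add of_nat_mult of_nat_CHAR) simp
  finally show ?thesis .
qed

lemma sf_prime: "is_subfield (range (of_nat :: nat \<Rightarrow> 'a::{finite,field}))"
  unfolding is_subfield_def
proof (intro conjI ballI)
  let ?p = "CHAR('a)"
  show "(0::'a) \<in> range of_nat" by (metis of_nat_0 rangeI)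
  show "(1::'a) \<in> range of_nat" by (metis of_nat_1 rangeI)
  fix x y :: 'a assume x: "x \<in> range of_nat" and y: "y \<in> range of_nat"
  then obtain i j where ij: "x = of_nat i" "y = of_nat j" by blast
  show "x + y \<in> range of_nat" using ij by (metis of_nat_add rangeI)
  show "x * y \<in> range of_nat" using ij by (metis of_nat_mult rangeI)
next
  let ?p = "CHAR('a)"
  fix x :: 'a assume x: "x \<in> range of_nat"
  then obtain i where i: "x = of_nat i" by blast
  have p1: "?p \<ge> 1" using char_gt1[where 'a='a] by simp
  obtain p' where pp: "?p = Suc p'" using p1 by (cases "?p") auto
  have e: "(?p - 1) * i + i = ?p * i" unfolding pp by simp
  have "(of_nat ((?p - 1) * i) :: 'a) + of_nat i = of_nat (?p * i)"
    by (simp only: of_nat_add[symmetric] e)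
  also have "\<dots> = 0" by simp
  finally have "- x = of_nat ((?p - 1) * i)" using i by (metis add.commute neg_eq_iff_add_eq_0)
  thus "- x \<in> range of_nat" by (metis rangeI)
  show "inverse x \<in> range of_nat"
  proof (cases "x = 0")
    case True thus ?thesis by (metis inverse_zero of_nat_0 rangeI)
  next
    case False
    hence "\<not> ?p dvd i" using i of_nat_eq_0_iff_char_dvd by blast
    hence "coprime i ?p" using char_prime[where 'a='a] by (metis coprime_commute prime_imp_coprime)
    then obtain j where "[i * j = Suc 0] (mod ?p)" using cong_solve_coprime_nat by blast
    hence "(of_nat (i * j) :: 'a) = of_nat (Suc 0)" using of_nat_eq_iff_cong_CHAR by blast
    hence "x * of_nat j = 1" using i by simp
    hence "inverse x = of_nat j" by (metis inverse_unique)
    thus ?thesis by simp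
  qed
qed

lemma card_prime_field: "card (range (of_nat :: nat \<Rightarrow> 'a::{finite,field})) = CHAR('a)"
proof -
  let ?p = "CHAR('a)"
  have "range (of_nat :: nat \<Rightarrow> 'a) = of_nat ` {..<?p}"
  proof
    show "range (of_nat :: nat \<Rightarrow> 'a) \<subseteq> of_nat ` {..<?p}"
    proof
      fix x :: 'a assume "x \<in> range of_nat"
      then obtain n where "x = of_nat n" by blast
      hence "x = of_nat (n mod ?p)" using of_nat_mod_char by metis
      moreover have "n mod ?p < ?p" using char_gt1[where 'a='a] by simp
      ultimately show "x \<in> of_nat ` {..<?p}" by blast
    qed
  qed auto
  moreover have "inj_on (of_nat :: nat \<Rightarrow> 'a) {..<?p}"
  proof (rule inj_onI)
    fix i j assume "i \<in> {..<?p}" "j \<in> {..<?p}" "(of_nat i :: 'a) = of_nat j"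
    thus "i = j" using of_nat_eq_iff_cong_CHAR[where 'a='a] by (auto simp: cong_def)
  qed
  ultimately show ?thesis by (simp add: card_image)
qed

lemma card_sf_char_pow:
  fixes K :: "'a::{finite,field} set"
  assumes K: "is_subfield K" shows "\<exists>m. card K = CHAR('a) ^ m"
proof -
  have "\<exists>m. card K = card (range (of_nat :: nat \<Rightarrow> 'a)) ^ m"
    by (rule card_power_sf[OF sf_prime]) (use K in \<open>auto intro: sf_0 sf_add sf_mult sf_of_nat\<close>)
  thus ?thesis using card_prime_field[where 'a='a] by simp
qed

lemma prime_deg_eq:
  fixes F :: "'a::{finite,field} set"
  assumes "card F = CHAR('a) ^ m" shows "prime_deg F = m"
  unfolding prime_deg_def
  by (rule the_equality) (use assms char_gt1[where 'a='a] power_inject_exp in auto)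

lemma ext_deg_eq:
  fixes K :: "'a::{finite,field} set"
  assumes "CARD('a) = card K ^ n" "card K > 1" shows "ext_deg K = n"
  unfolding ext_deg_def
  by (rule the_equality) (use assms power_inject_exp in auto)

lemma frob_add: "((x::'a::{finite,field}) + y) ^ (CHAR('a) ^ j) = x ^ (CHAR('a) ^ j) + y ^ (CHAR('a) ^ j)"
  by (rule freshmans_dream'[OF char_prime refl])

lemma frob_of_nat: "(of_nat n :: 'a::{finite,field}) ^ (CHAR('a) ^ j) = of_nat n"
proof (induction n)
  case (Suc n)
  have "(of_nat (Suc n) :: 'a) = of_nat n + 1" by simp
  thus ?case using Suc frob_add[of 1 "of_nat n :: 'a" j] by simp
qed (use char_gt1[where 'a='a] in simp)

lemma fpsi_cong: "ftrace F x = ftrace G y \<Longrightarrow> fpsi F x = fpsi G y"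
  by (simp add: fpsi_def)

lemma ftrace_frob:
  assumes M: "CARD('a::{finite,field}) = CHAR('a) ^ M"
  shows "ftrace (UNIV::'a set) (y ^ CHAR('a)) = ftrace UNIV y"
proof -
  let ?p = "CHAR('a)"
  have pd: "prime_deg (UNIV::'a set) = M" using prime_deg_eq[of "UNIV::'a set" M] M by simp
  define f where "f i = y ^ (?p ^ i)" for i
  have "ftrace (UNIV::'a set) (y ^ ?p) = (\<Sum>i<M. f (Suc i))"
    unfolding ftrace_def pd f_def by (simp add: power_mult[symmetric] mult.commute)
  also have "\<dots> = (\<Sum>i<M. f i)"
  proof -
    have A: "f 0 + (\<Sum>i<M. f (Suc i)) = (\<Sum>i<M. f i) + f M"
      using sum.lessThan_Suc_shift[of f M] by simp
    have "f M = f 0" unfolding f_def using power_card_sf[OF sf_UNIV, of y] M by simp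
    thus ?thesis using A by (simp add: add.commute)
  qed
  finally show ?thesis unfolding ftrace_def pd f_def by simp
qed

lemma fpsi_frob_pow:
  assumes M: "CARD('a::{finite,field}) = CHAR('a) ^ M"
  shows "fpsi (UNIV::'a set) (y ^ (CHAR('a) ^ j)) = fpsi UNIV y"
proof (induction j)
  case (Suc j)
  have "y ^ (CHAR('a) ^ Suc j) = (y ^ (CHAR('a) ^ j)) ^ CHAR('a)"
    by (simp add: power_mult[symmetric] mult.commute)
  thus ?case using Suc fpsi_cong[OF ftrace_frob[OF M]] by metis
qed simp

lemma sum_lessThan_add: "(\<Sum>i<(a::nat) + b. f i) = (\<Sum>i<a. f i) + (\<Sum>i<b. f (a + i))"
  by (induction b) (simp_all add: add.assoc)

lemma trace_sub:
  fixes K :: "'a::{finite,field} set"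
  assumes K: "is_subfield K" and m: "card K = CHAR('a) ^ m" and n: "CARD('a) = card K ^ n"
    and y: "y \<in> K"
  shows "ftrace (UNIV::'a set) y = ftrace K (of_nat n * y)"
proof -
  let ?p = "CHAR('a)"
  have pdU: "prime_deg (UNIV::'a set) = m * n" using n m by (intro prime_deg_eq) (simp add: power_mult)
  have pdK: "prime_deg K = m" using prime_deg_eq[OF m] .
  define f where "f i = y ^ (?p ^ i)" for i
  have ym: "y ^ (?p ^ m) = y" using power_card_sf[OF K y] m by simp
  have per0: "y ^ (?p ^ (m * j)) = y" for j
  proof (induction j)
    case (Suc j)
    have "y ^ (?p ^ (m * Suc j)) = (y ^ (?p ^ (m * j))) ^ (?p ^ m)"
      by (simp add: power_mult[symmetric] power_add mult.commute)
    thus ?case using Suc ym by simp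
  qed simp
  have per: "f (m * j + i) = f i" for j i
  proof -
    have "f (m * j + i) = (y ^ (?p ^ (m * j))) ^ (?p ^ i)"
      unfolding f_def by (simp add: power_mult[symmetric] power_add)
    thus ?thesis using per0[of j] unfolding f_def by simp
  qed
  have S: "(\<Sum>i<m * j. f i) = of_nat j * (\<Sum>i<m. f i)" for j
  proof (induction j)
    case (Suc j)
    have A0: "(\<Sum>i<m * Suc j. f i) = (\<Sum>i<m * j + m. f i)"
      using mult_Suc_right[of m j] by (simp only: add.commute)
    have A: "(\<Sum>i<m * Suc j. f i) = (\<Sum>i<m * j. f i) + (\<Sum>i<m. f (m * j + i))"
      unfolding A0 by (rule sum_lessThan_add)
    have B: "(\<Sum>i<m. f (m * j + i)) = (\<Sum>i<m. f i)" using per by simp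
    show ?case unfolding A B Suc.IH by (simp add: distrib_right)
  qed simp
  have "ftrace (UNIV::'a set) y = (\<Sum>i<m * n. f i)"
    unfolding ftrace_def pdU f_def by simp
  also have "\<dots> = of_nat n * (\<Sum>i<m. f i)" by (rule S)
  also have "\<dots> = (\<Sum>i<m. of_nat n * f i)" by (rule sum_distrib_left)
  also have "\<dots> = ftrace K (of_nat n * y)"
    unfolding ftrace_def pdK f_def
    by (rule sum.cong[OF refl]) (simp only: power_mult_distrib frob_of_nat)
  finally show ?thesis .
qed



lemma funpow_mult_id:
  assumes "(f ^^ N) x = x" shows "(f ^^ (N * j)) x = x"
proof (induction j)
  case (Suc j)
  have "(f ^^ (N * Suc j)) x = (f ^^ N) ((f ^^ (N * j)) x)"
    by (simp add: funpow_add mult.commute)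
  also have "\<dots> = x" using Suc assms by simp
  finally show ?case .
qed simp

lemma funpow_mod_id:
  assumes "(f ^^ N) x = x" shows "(f ^^ i) x = (f ^^ (i mod N)) x"
proof -
  have "(f ^^ i) x = (f ^^ (i mod N)) ((f ^^ (N * (i div N))) x)"
    by (metis funpow_add comp_apply mod_mult_div_eq add.commute)
  thus ?thesis using funpow_mult_id[OF assms] by simp
qed

lemma orbit_sum:
  fixes f :: "'b \<Rightarrow> 'b" and g :: "'b \<Rightarrow> 'c::comm_semiring_1"
  assumes "finite S" "prime l" "\<forall>x\<in>S. f x \<in> S" "\<forall>x\<in>S. (f ^^ (l ^ k)) x = x"
    "\<forall>x\<in>S. f x \<noteq> x" "\<forall>x\<in>S. g (f x) = g x"
  shows "\<exists>c. sum g S = of_nat l * (\<Sum>x\<in>S. of_nat (c x) * g x)"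
  using assms
proof (induction "card S" arbitrary: S rule: less_induct)
  case less
  show ?case
  proof (cases "S = {}")
    case True thus ?thesis by simp
  next
    case False
    then obtain x where xS: "x \<in> S" by blast
    define N where "N = l ^ k"
    have N: "N > 0" using less.prems(2) unfolding N_def by (simp add: prime_gt_0_nat)
    have inS: "(f ^^ i) y \<in> S" if "y \<in> S" for i y
      using that less.prems(3) by (induction i) auto
    have gi: "g ((f ^^ i) y) = g y" if "y \<in> S" for i y
      using that
    proof (induction i)
      case (Suc i) thus ?case using inS[OF Suc.prems, of i] less.prems(6) by simp
    qed simp
    have fN: "(f ^^ N) y = y" if "y \<in> S" for y using less.prems(4) that N_def by simp
    define r where "r = (LEAST i. 0 < i \<and> (f ^^ i) x = x)"
    have ex: "0 < N \<and> (f ^^ N) x = x" using N fN[OF xS] by simp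
    have r: "0 < r \<and> (f ^^ r) x = x" unfolding r_def by (rule LeastI[of _ N], rule ex)
    have rN: "r \<le> N" unfolding r_def by (rule Least_le, rule ex)
    have rmin: "\<not> ((f ^^ i) x = x)" if "0 < i" "i < r" for i
      using not_less_Least[of i "\<lambda>i. 0 < i \<and> (f ^^ i) x = x"] that unfolding r_def by blast
    define Ob where "Ob = (\<lambda>i. (f ^^ i) x) ` {..<r}"
    have ObS: "Ob \<subseteq> S" unfolding Ob_def using inS[OF xS] by auto
    have xO: "x \<in> Ob" unfolding Ob_def using r by (auto intro: image_eqI[of _ _ 0])
    have inO: "(f ^^ i) x \<in> Ob" for i
    proof -
      have "(f ^^ i) x = (f ^^ (i mod r)) x" using funpow_mod_id r by metis
      moreover have "i mod r < r" using r by simp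
      ultimately show ?thesis unfolding Ob_def by auto
    qed
    have inj: "inj_on (\<lambda>i. (f ^^ i) x) {..<r}"
    proof (rule inj_onI, rule ccontr)
      fix i j assume ij: "i \<in> {..<r}" "j \<in> {..<r}" "(f ^^ i) x = (f ^^ j) x" "i \<noteq> j"
      have key: "(f ^^ (b - a)) x = x" if "a < b" "b < r" "(f ^^ a) x = (f ^^ b) x" for a b
      proof -
        have "N - a + a = N" using that rN by simp
        hence "(f ^^ (N - a)) ((f ^^ a) x) = (f ^^ N) x"
          by (metis funpow_add comp_apply)
        hence 1: "(f ^^ (N - a)) ((f ^^ a) x) = x" using fN[OF xS] by simp
        have "(f ^^ (N - a)) ((f ^^ b) x) = (f ^^ (N - a + b)) x"
          by (simp add: funpow_add)
        also have "N - a + b = (b - a) + N" using that rN by simp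
        also have "(f ^^ ((b - a) + N)) x = (f ^^ (b - a)) ((f ^^ N) x)" by (simp add: funpow_add)
        also have "\<dots> = (f ^^ (b - a)) x" using fN[OF xS] by simp
        finally show ?thesis using 1 that(3) by simp
      qed
      show False
      proof (cases "i < j")
        case True
        thus False using key[of i j] ij rmin[of "j - i"] by auto
      next
        case False
        hence "j < i" using ij by simp
        thus False using key[of j i] ij rmin[of "i - j"] by auto
      qed
    qed
    have cardO: "card Ob = r" unfolding Ob_def using card_image[OF inj] by simp
    have rdvd: "r dvd N"
    proof -
      have "(f ^^ (N mod r)) x = x" using funpow_mod_id[where N=r and i=N and f=f and x=x] r fN[OF xS] by simp
      moreover have "N mod r < r" using r by simp
      ultimately have "N mod r = 0" using rmin by (metis neq0_conv)
      thus ?thesis by (simp add: dvd_eq_mod_eq_0)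
    qed
    then obtain j where j: "j \<le> k" "r = l ^ j" unfolding N_def
      using divides_primepow_nat[OF less.prems(2)] by blast
    have "j \<noteq> 0"
    proof
      assume "j = 0"
      hence "r = 1" using j by simp
      hence "f x = x" using r by simp
      thus False using less.prems(5) xS by blast
    qed
    hence ldvd: "l dvd r" using j by (simp add: dvd_power)
    have gO: "sum g Ob = of_nat r * g x"
    proof -
      have "sum g Ob = sum (\<lambda>_. g x) Ob"
        by (rule sum.cong) (auto simp: Ob_def gi[OF xS])
      thus ?thesis using cardO by simp
    qed
    have inv: "f y \<in> S - Ob" if "y \<in> S - Ob" for y
    proof
      show "f y \<in> S" using that less.prems(3) by blast
      show "f y \<notin> Ob"
      proof
        assume "f y \<in> Ob"
        then obtain i where i: "f y = (f ^^ i) x" unfolding Ob_def by auto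
        have "y = (f ^^ N) y" using fN that by simp
        also have "\<dots> = (f ^^ (N - 1)) (f y)" using N
          by (metis Suc_diff_1 comp_apply funpow_Suc_right)
        also have "\<dots> = (f ^^ (N - 1 + i)) x" using i by (simp add: funpow_add)
        finally have "y \<in> Ob" using inO by simp
        thus False using that by blast
      qed
    qed
    have "S - Ob \<subset> S" using xO xS by blast
    hence "card (S - Ob) < card S" using psubset_card_mono[OF less.prems(1)] by blast
    moreover have "finite (S - Ob)" using less.prems(1) by simp
    ultimately obtain c0 where c0: "sum g (S - Ob) = of_nat l * (\<Sum>y\<in>S - Ob. of_nat (c0 y) * g y)"
      using less.hyps[of "S - Ob"] less.prems inv by auto
    define c where "c y = (if y = x then r div l else if y \<in> Ob then 0 else c0 y)" for y
    have s1: "(\<Sum>y\<in>S. of_nat (c y) * g y) = (\<Sum>y\<in>S - Ob. of_nat (c y) * g y) + (\<Sum>y\<in>Ob. of_nat (c y) * g y)"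
      using sum.subset_diff[OF ObS less.prems(1)] by simp
    have s2: "(\<Sum>y\<in>S - Ob. of_nat (c y) * g y) = (\<Sum>y\<in>S - Ob. of_nat (c0 y) * g y)"
      by (rule sum.cong) (use xO in \<open>auto simp: c_def\<close>)
    have s3: "(\<Sum>y\<in>Ob. of_nat (c y) * g y) = (\<Sum>y\<in>Ob. if y = x then of_nat (r div l) * g x else 0)"
      by (rule sum.cong) (auto simp: c_def)
    have s4: "(\<Sum>y\<in>Ob. if y = x then of_nat (r div l) * g x else 0) = of_nat (r div l) * g x"
    proof -
      have "finite Ob" using ObS less.prems(1) finite_subset by blast
      thus ?thesis using xO sum.delta[of Ob x "\<lambda>_. of_nat (r div l) * g x"] by simp
    qed
    have "sum g S = sum g (S - Ob) + sum g Ob"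
      using sum.subset_diff[OF ObS less.prems(1)] by simp
    also have "\<dots> = of_nat l * (\<Sum>y\<in>S. of_nat (c y) * g y)"
    proof -
      have "of_nat r = (of_nat l * of_nat (r div l) :: 'c)" using ldvd by (metis dvd_mult_div_cancel of_nat_mult)
      thus ?thesis using c0 gO s1 s2 s3 s4 by (simp add: distrib_left mult_ac)
    qed
    finally show ?thesis by blast
  qed
qed



lemma pow_mod_root:
  fixes z :: complex
  assumes "z ^ p = 1" shows "z ^ (n mod p) = z ^ n"
proof -
  have "z ^ n = z ^ (p * (n div p)) * z ^ (n mod p)" by (metis div_mult_mod_eq mult.commute power_add)
  also have "z ^ (p * (n div p)) = 1" by (simp add: power_mult assms)
  finally show ?thesis by simp
qed

lemma alg_int_cyc:
  fixes z :: complex and c :: "nat \<Rightarrow> int"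
  assumes p: "p > 0" and z: "z ^ p = 1"
  shows "algebraic_int (\<Sum>t<p. of_int (c t) * z ^ t)"
proof -
  define x where "x = (\<Sum>t<p. of_int (c t) * z ^ t)"
  define A :: "int mat" where "A = mat p p (\<lambda>(i,j). c ((j + p - i) mod p))"
  define v where "v = vec p (\<lambda>j. z ^ j)"
  have A: "A \<in> carrier_mat p p" unfolding A_def by simp
  let ?B = "of_int_hom.mat_hom A :: complex mat"
  have B: "?B \<in> carrier_mat p p" using A by simp
  have "?B *\<^sub>v v = x \<cdot>\<^sub>v v"
  proof (rule eq_vecI)
    fix i assume "i < dim_vec (x \<cdot>\<^sub>v v)"
    hence i: "i < p" by (simp add: v_def)
    have "(?B *\<^sub>v v) $ i = (\<Sum>j<p. of_int (c ((j + p - i) mod p)) * z ^ j)"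
      using i by (simp add: A_def v_def mult_mat_vec_def scalar_prod_def row_def lessThan_atLeast0)
    also have "\<dots> = (\<Sum>t<p. of_int (c t) * z ^ (t + i))"
    proof -
      have e1: "((a + p - i) mod p + i) mod p = a" if "a < p" for a
      proof -
        have "((a + p - i) mod p + i) mod p = ((a + p - i) + i) mod p" by (simp add: mod_add_left_eq)
        also have "(a + p - i) + i = a + p" using i by simp
        finally show ?thesis using that by simp
      qed
      have e2: "((t + i) mod p + p - i) mod p = t" if "t < p" for t
      proof -
        have "((t + i) mod p + p - i) mod p = ((t+i) mod p + (p - i)) mod p" using i by simp
        also have "\<dots> = ((t + i) + (p - i)) mod p" by (simp add: mod_add_left_eq)
        also have "(t + i) + (p - i) = t + p" using i by simp
        finally show ?thesis using that by simp
      qed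
      have e3: "z ^ ((a + p - i) mod p + i) = z ^ a" if "a < p" for a
        by (metis e1[OF that] pow_mod_root[OF z])
      show ?thesis
        by (rule sum.reindex_bij_witness[of _ "\<lambda>t. (t + i) mod p" "\<lambda>j. (j + p - i) mod p"])
           (use p e1 e2 e3 in \<open>auto simp: power_add\<close>)
    qed
    also have "\<dots> = x * z ^ i" unfolding x_def sum_distrib_right by (simp add: power_add mult_ac)
    also have "\<dots> = (x \<cdot>\<^sub>v v) $ i" using i by (simp add: v_def)
    finally show "(?B *\<^sub>v v) $ i = (x \<cdot>\<^sub>v v) $ i" .
  qed (simp add: v_def A_def)
  moreover have "v \<noteq> 0\<^sub>v p"
  proof
    assume "v = 0\<^sub>v p"
    hence "v $ 0 = 0" using p by simp
    thus False using p by (simp add: v_def)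
  qed
  ultimately have "eigenvalue ?B x"
    unfolding eigenvalue_def eigenvector_def using B by (intro exI[of _ v]) (auto simp: v_def)
  hence "poly (char_poly ?B) x = 0" using eigenvalue_root_char_poly[OF B] by simp
  hence root: "poly (of_int_poly (char_poly A)) x = 0" using of_int_hom.char_poly_hom[OF A] by metis
  have "degree (char_poly A) = p \<and> coeff (char_poly A) p = 1" by (rule degree_monic_char_poly[OF A])
  hence "lead_coeff (of_int_poly (char_poly A) :: complex poly) = 1"
    by (simp add: degree_map_poly coeff_map_poly)
  moreover have "\<forall>i. coeff (of_int_poly (char_poly A) :: complex poly) i \<in> \<int>"
    by (simp add: coeff_map_poly)
  ultimately show ?thesis unfolding x_def[symmetric] using root by (intro algebraic_int.intros) auto
qed



lemma powi_power_comm: "((x::'a::field) powi d) ^ k = (x ^ k) powi d"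
  by (simp add: power_int_power power_int_power' mult.commute)

lemma sum_to_cyc:
  fixes z :: complex and f :: "'b \<Rightarrow> int"
  assumes "finite S" "z ^ p = 1" "p > 0"
  shows "\<exists>c. (\<Sum>x\<in>S. of_int (f x) * z ^ (t x)) = (\<Sum>j<p. of_int (c j) * z ^ j)"
  using assms(1)
proof (induction S rule: finite_induct)
  case empty thus ?case by (intro exI[of _ "\<lambda>_. 0"]) simp
next
  case (insert x S)
  then obtain c where c: "(\<Sum>x\<in>S. of_int (f x) * z ^ (t x)) = (\<Sum>j<p. of_int (c j) * z ^ j)" by blast
  define c' where "c' j = c j + (if j = t x mod p then f x else 0)" for j
  have pt: "of_int (c' j) * z ^ j = of_int (c j) * z ^ j + (if j = t x mod p then of_int (f x) * z ^ j else 0)" for j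
    unfolding c'_def by (cases "j = t x mod p") (simp_all add: distrib_right)
  have "(\<Sum>j<p. of_int (c' j) * z ^ j) = (\<Sum>j<p. of_int (c j) * z ^ j) + (\<Sum>j<p. if j = t x mod p then of_int (f x) * z ^ j else 0)"
    by (simp only: pt sum.distrib)
  also have "(\<Sum>j<p. if j = t x mod p then of_int (f x) * z ^ j else 0) = of_int (f x) * z ^ (t x mod p)"
    using assms(3) by (simp add: sum.delta)
  also have "z ^ (t x mod p) = z ^ t x"
  proof -
    have "z ^ t x = z ^ (p * (t x div p)) * z ^ (t x mod p)" by (metis div_mult_mod_eq mult.commute power_add)
    also have "z ^ (p * (t x div p)) = 1" by (simp add: power_mult assms(2))
    finally show ?thesis by simp
  qed
  finally show ?case using insert c by (intro exI[of _ c']) (simp add: add.commute)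
qed

lemma fpsi_root:
  fixes F :: "'a::{finite,field} set"
  shows "\<exists>t. fpsi F y = exp (2 * of_real pi * \<i> / of_nat CHAR('a)) ^ t"
proof -
  define t where "t = (SOME t. t < CHAR('a) \<and> of_nat t = ftrace F y)"
  have "fpsi F y = exp (of_nat t * (2 * of_real pi * \<i> / of_nat CHAR('a)))"
    unfolding fpsi_def t_def[symmetric] by (simp add: field_simps)
  thus ?thesis by (intro exI[of _ t]) (simp only: exp_of_nat_mult)
qed

lemma root_p: "exp (2 * of_real pi * \<i> / of_nat CHAR('a::{finite,field})) ^ CHAR('a) = 1"
proof -
  have "exp (2 * of_real pi * \<i> / of_nat CHAR('a)) ^ CHAR('a)
     = exp (of_nat CHAR('a) * (2 * of_real pi * \<i> / of_nat CHAR('a)))"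
    by (rule exp_of_nat_mult[symmetric])
  also have "of_nat CHAR('a) * (2 * of_real pi * \<i> / of_nat CHAR('a)) = 2 * of_real pi * \<i>"
    using char_gt1[where 'a='a] by simp
  finally show ?thesis using exp_two_pi_i by metis
qed



lemma roots_in_K:
  fixes K :: "'a::{finite,field} set"
  assumes K: "is_subfield K" and q: "card K > 1" and x: "x ^ card K = x"
  shows "x \<in> K"
proof -
  define q where "q = card K"
  define P :: "'a poly" where "P = monom 1 q - [:0, 1:]"
  have cP: "coeff P q = 1" using q unfolding P_def q_def
    by (cases "card K") (auto simp: coeff_monom coeff_pCons split: nat.splits)
  hence P0: "P \<noteq> 0" by auto
  have dP: "degree P \<le> q" unfolding P_def
    by (rule degree_diff_le) (auto simp: degree_monom_le q_def intro: order.trans[OF degree_pCons_le] , use q in simp)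
  have evP: "poly P y = y ^ q - y" for y unfolding P_def by (simp add: poly_monom)
  have "K \<subseteq> {y. poly P y = 0}" using power_card_sf[OF K] evP q_def by auto
  moreover have "card {y. poly P y = 0} \<le> card K" using card_poly_roots_bound[OF P0] dP q_def by simp
  ultimately have "K = {y. poly P y = 0}" using card_subset_eq[of "{y. poly P y = 0}" K]
    by (metis card_mono finite le_antisym)
  moreover have "poly P x = 0" using evP x q_def by simp
  ultimately show ?thesis by blast
qed

theorem lemma3p3:
  fixes K :: "'a::{finite,field} set" and l :: nat and d e :: int and a :: 'a
  assumes "is_subfield K"
    and "prime l" and "l \<noteq> CHAR('a)"
    and "\<exists>k. ext_deg K = l ^ k"
    and "gcd d (int CARD('a) - 1) = 1"
    and "[d * e = 1] (mod (int CHAR('a) - 1))"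
    and "a \<in> K"
  shows "\<exists>\<beta>::complex. algebraic_int \<beta> \<and>
           Wsum (UNIV::'a set) d a
             - Wsum K d ((of_nat (ext_deg K) :: 'a) powi (1 - e) * a)
           = of_nat l * \<beta>"
proof -
  note K = assms(1)
  let ?p = "CHAR('a)"
  define q where "q = card K"
  define n where "n = ext_deg K"
  have q1: "q > 1"
  proof -
    have "{0, 1} \<subseteq> K" using sf_0[OF K] sf_1[OF K] by auto
    hence "card {0, 1::'a} \<le> card K" by (intro card_mono) auto
    thus ?thesis unfolding q_def by simp
  qed
  obtain n0 where n0: "CARD('a) = q ^ n0"
    using card_power_sf[OF K, of UNIV] unfolding q_def by auto
  have nn0: "n = n0" unfolding n_def using ext_deg_eq[of K n0] n0 q1 q_def by simp
  have Qn: "CARD('a) = q ^ n" using n0 nn0 by simp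
  obtain m where m: "q = ?p ^ m" using card_sf_char_pow[OF K] q_def by blast
  obtain k where nk: "n = l ^ k" using assms(4) n_def by blast
  have npos: "n > 0" using nk assms(2) prime_gt_0_nat by simp
  have QM: "CARD('a) = ?p ^ (m * n)" using Qn m by (simp add: power_mult)
  define phi :: "'a \<Rightarrow> 'a" where "phi x = x ^ q" for x
  have phij: "(phi ^^ j) x = x ^ (q ^ j)" for j x
    by (induction j) (simp_all add: phi_def power_mult[symmetric] mult.commute)
  have phiN: "(phi ^^ (l ^ k)) x = x" for x
    using phij[of "l ^ k" x] nk Qn power_card_sf[OF sf_UNIV, of x] by simp
  define g where "g x = fpsi (UNIV::'a set) (x powi d + a * x)" for x
  define S where "S = UNIV - K"
  have gphi: "g (phi x) = g x" for x
  proof -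
    have aq: "a ^ (?p ^ m) = a" using power_card_sf[OF K assms(7)] q_def m by simp
    have "(x powi d + a * x) ^ q = (x ^ q) powi d + a * x ^ q"
      using frob_add[of "x powi d" "a * x" m] m aq
      by (simp add: powi_power_comm power_mult_distrib)
    hence "phi x powi d + a * phi x = (x powi d + a * x) ^ (?p ^ m)" using m by (simp add: phi_def)
    thus ?thesis unfolding g_def using fpsi_frob_pow[OF QM] by simp
  qed
  have phiS: "phi x \<in> S" if "x \<in> S" for x
  proof (rule ccontr)
    assume "phi x \<notin> S"
    hence "x ^ q \<in> K" unfolding S_def phi_def by simp
    hence "(x ^ q) ^ (q ^ (n - 1)) \<in> K" by (rule sf_power[OF K])
    moreover have "(x ^ q) ^ (q ^ (n - 1)) = x"
    proof -
      have "(x ^ q) ^ (q ^ (n - 1)) = x ^ (q ^ n)" using npos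
        by (metis power_mult power_Suc Suc_diff_1)
      thus ?thesis using Qn power_card_sf[OF sf_UNIV, of x] by simp
    qed
    ultimately show False using that S_def by simp
  qed
  have nofix: "phi x \<noteq> x" if "x \<in> S" for x
    using roots_in_K[OF K, of x] q1 that unfolding S_def phi_def q_def by auto
  obtain c where c: "sum g S = of_nat l * (\<Sum>x\<in>S. of_nat (c x) * g x)"
    using orbit_sum[of S l phi k g] assms(2) phiS phiN nofix gphi by auto
  define N where "N = (of_nat n :: 'a)"
  have N0: "N \<noteq> 0"
  proof
    assume "N = 0"
    hence "?p dvd l ^ k" using N_def nk of_nat_eq_0_iff_char_dvd by metis
    hence "?p dvd l" using char_prime[where 'a='a] prime_dvd_power by blast
    hence "?p = l" using assms(2) char_prime[where 'a='a] by (metis primes_dvd_imp_eq)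
    thus False using assms(3) by simp
  qed
  have Np: "N ^ (?p - 1) = 1"
  proof -
    have "N ^ ?p = N" using frob_of_nat[of n 1] N_def by simp
    obtain p' where pp: "?p = Suc p'" using char_gt1[where 'a='a] by (cases "?p") auto
    have "N * N ^ p' = N * 1" using \<open>N ^ ?p = N\<close> pp by simp
    hence "N ^ p' = 1" using N0 mult_cancel_left[of N "N ^ p'" 1] by blast
    thus ?thesis using pp by simp
  qed
  obtain s where s: "d * e - 1 = (int ?p - 1) * s" using assms(6) by (metis cong_iff_dvd_diff dvd_def)
  define c0 where "c0 = N powi (- e)"
  have c00: "c0 \<noteq> 0" unfolding c0_def using N0 by simp
  have NK: "N \<in> K" unfolding N_def by (rule sf_of_nat[OF K])
  have c0K: "c0 \<in> K" unfolding c0_def by (rule sf_powi[OF K NK])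
  have key1: "N * c0 powi d = 1"
  proof -
    have "c0 powi d = N powi (- e * d)" unfolding c0_def using power_int_mult[of N "- e" d] by simp
    hence "N * c0 powi d = N powi (1 + (- e * d))" using N0 power_int_add[of N 1 "- e * d"] by simp
    also have "1 + (- e * d) = (int (?p - 1)) * (- s)" using s char_gt1[where 'a='a]
      by (simp add: algebra_simps of_nat_diff)
    also have "N powi (int (?p - 1) * (- s)) = 1"
      using power_int_mult[of N "int (?p - 1)" "- s"] Np by simp
    finally show ?thesis .
  qed
  have key2: "N * c0 = N powi (1 - e)" unfolding c0_def using N0 power_int_add[of N 1 "- e"] by simp
  have Kpart: "sum g K = Wsum K d (N powi (1 - e) * a)"
  proof -
    have "sum g K = (\<Sum>x\<in>K. fpsi K (N * (x powi d + a * x)))"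
    proof (rule sum.cong[OF refl])
      fix x assume x: "x \<in> K"
      have "x powi d + a * x \<in> K" using x assms(7) K by (intro sf_add sf_mult sf_powi) auto
      thus "g x = fpsi K (N * (x powi d + a * x))" unfolding g_def N_def
        by (intro fpsi_cong trace_sub[OF K] ) (use m Qn q_def in auto)
    qed
    also have "\<dots> = Wsum K d (N powi (1 - e) * a)" unfolding Wsum_def
    proof -
      have E: "fpsi K (N * ((c0 * y) powi d + a * (c0 * y))) = fpsi K (y powi d + N powi (1 - e) * a * y)" for y
      proof -
        have "N * ((c0 * y) powi d + a * (c0 * y)) = (N * c0 powi d) * y powi d + (N * c0) * a * y"
          by (simp add: power_int_mult_distrib algebra_simps)
        also have "\<dots> = y powi d + N powi (1 - e) * a * y" using key1 key2 by simp
        finally show ?thesis by simp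
      qed
      show "(\<Sum>x\<in>K. fpsi K (N * (x powi d + a * x))) = (\<Sum>y\<in>K. fpsi K (y powi d + N powi (1 - e) * a * y))"
      proof (rule sum.reindex_bij_witness[of _ "\<lambda>y. c0 * y" "\<lambda>x. x / c0"])
        fix x assume x: "x \<in> K"
        show "c0 * (x / c0) = x" using c00 by simp
        show "x / c0 \<in> K" using x c0K K by (simp add: divide_inverse sf_mult sf_inverse)
        show "fpsi K ((x / c0) powi d + N powi (1 - e) * a * (x / c0)) = fpsi K (N * (x powi d + a * x))"
          using E[of "x / c0"] c00 by simp
      next
        fix y assume y: "y \<in> K"
        show "c0 * y / c0 = y" using c00 by simp
        show "c0 * y \<in> K" using sf_mult[OF K c0K y] .
      qed
    qed
    finally show ?thesis .
  qed
  have split: "Wsum (UNIV::'a set) d a = sum g S + sum g K"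
    unfolding Wsum_def g_def[symmetric] S_def using sum.subset_diff[of K UNIV g] by simp
  define z where "z = exp (2 * of_real pi * \<i> / of_nat ?p)"
  have z: "z ^ ?p = 1" unfolding z_def by (rule root_p)
  have "\<forall>x. \<exists>t. g x = z ^ t" unfolding g_def z_def using fpsi_root by blast
  then obtain tt where tt: "\<And>x. g x = z ^ tt x" by metis
  define \<beta> where "\<beta> = (\<Sum>x\<in>S. of_nat (c x) * g x)"
  have "\<beta> = (\<Sum>x\<in>S. of_int (int (c x)) * z ^ tt x)" unfolding \<beta>_def using tt by simp
  moreover obtain c' where "(\<Sum>x\<in>S. of_int (int (c x)) * z ^ tt x) = (\<Sum>j<?p. of_int (c' j) * z ^ j)"
    using sum_to_cyc[of S z ?p "\<lambda>x. int (c x)" tt] z char_gt1[where 'a='a] by auto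
  ultimately have "algebraic_int \<beta>" using alg_int_cyc[of ?p z c'] z char_gt1[where 'a='a] by simp
  moreover have "Wsum (UNIV::'a set) d a - Wsum K d ((of_nat (ext_deg K) :: 'a) powi (1 - e) * a)
      = of_nat l * \<beta>"
    using split Kpart c unfolding \<beta>_def N_def n_def by simp
  ultimately show ?thesis by blast
qed

end
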